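(* For all $T>0$ and Borel $V$, $\|N(V,T)\|_\infty\le\|N(V)\|_{T,\infty}\le2\|N(V,T)\|_\infty$. Moreover there is a constant $C$ depending only on $d$ such that for all $T>0$ and Borel $V$, $\|S(V,T)\|_\infty\le\|S(V)\|_{T,\infty}\le C\|S(V,T)\|_\infty$.
   Context: $g(t,x,y)=(4\pi t)^{-d/2}e^{-|y-x|^2/(4t)}$. $S(V,t,x,y)=\int_0^t\int_{\mathbb{R}^d}\frac{g(s,x,z)g(t-s,z,y)}{g(t,x,y)}|V(z)|\,dz\,ds$, $\|S(V,t)\|_\infty=\sup_{x,y}S(V,t,x,y)$, $\|S(V)\|_{T,\infty}=\sup_{0<t\le T}\|S(V,t)\|_\infty$. $N(V,t,x,y)=\int_0^{t/2}\int_{\mathbb{R}^d}\tau^{-d/2}e^{-|z-y+(\tau/t)(y-x)|^2/(4\tau)}|V(z)|\,dz\,d\tau+\int_{t/2}^t\int_{\mathbb{R}^d}(t-\tau)^{-d/2}e^{-|z-y+(\tau/t)(y-x)|^2/(4(t-\tau))}|V(z)|\,dz\,d\tau$, $\|N(V,t)\|_\infty=\sup_{x,y}N(V,t,x,y)$, $\|N(V)\|_{T,\infty}=\sup_{0<t\le T}\|N(V,t)\|_\infty$. *)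

theory Defs
  imports "HOL-Analysis.Analysis"
begin

definition gker :: "real \<Rightarrow> 'a::euclidean_space \<Rightarrow> 'a \<Rightarrow> real" where
  "gker t x y = (4 * pi * t) powr (- real DIM('a) / 2) * exp (- (norm (y - x))\<^sup>2 / (4 * t))"

definition Sfun :: "('a::euclidean_space \<Rightarrow> real) \<Rightarrow> real \<Rightarrow> 'a \<Rightarrow> 'a \<Rightarrow> ennreal" where
  "Sfun V t x y = (\<integral>\<^sup>+ s. indicator {0<..<t} s *
      (\<integral>\<^sup>+ z. ennreal (gker s x z * gker (t - s) z y / gker t x y * \<bar>V z\<bar>) \<partial>lborel) \<partial>lborel)"

definition Snorm :: "('a::euclidean_space \<Rightarrow> real) \<Rightarrow> real \<Rightarrow> ennreal" where
  "Snorm V t = (SUP xy \<in> (UNIV :: ('a \<times> 'a) set). Sfun V t (fst xy) (snd xy))"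

definition SnormT :: "('a::euclidean_space \<Rightarrow> real) \<Rightarrow> real \<Rightarrow> ennreal" where
  "SnormT V T = (SUP t \<in> {0<..T}. Snorm V t)"

definition Nfun :: "('a::euclidean_space \<Rightarrow> real) \<Rightarrow> real \<Rightarrow> 'a \<Rightarrow> 'a \<Rightarrow> ennreal" where
  "Nfun V t x y =
     (\<integral>\<^sup>+ \<tau>. indicator {0<..<t/2} \<tau> *
        (\<integral>\<^sup>+ z. ennreal (\<tau> powr (- real DIM('a) / 2) *
            exp (- (norm (z - y + (\<tau> / t) *\<^sub>R (y - x)))\<^sup>2 / (4 * \<tau>)) * \<bar>V z\<bar>) \<partial>lborel) \<partial>lborel)
   + (\<integral>\<^sup>+ \<tau>. indicator {t/2..<t} \<tau> *
        (\<integral>\<^sup>+ z. ennreal ((t - \<tau>) powr (- real DIM('a) / 2) *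
            exp (- (norm (z - y + (\<tau> / t) *\<^sub>R (y - x)))\<^sup>2 / (4 * (t - \<tau>))) * \<bar>V z\<bar>) \<partial>lborel) \<partial>lborel)"

definition Nnorm :: "('a::euclidean_space \<Rightarrow> real) \<Rightarrow> real \<Rightarrow> ennreal" where
  "Nnorm V t = (SUP xy \<in> (UNIV :: ('a \<times> 'a) set). Nfun V t (fst xy) (snd xy))"

definition NnormT :: "('a::euclidean_space \<Rightarrow> real) \<Rightarrow> real \<Rightarrow> ennreal" where
  "NnormT V T = (SUP t \<in> {0<..T}. Nnorm V t)"

end

theory Submission
  imports Defs
begin

lemma vec1:
  fixes x y :: "'a::real_vector"
  assumes "t \<noteq> 0" "T \<noteq> 0"
  shows "(\<tau> / T) *\<^sub>R (y - (y + (T / t) *\<^sub>R (x - y))) = (\<tau> / t) *\<^sub>R (y - x)"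
proof -
  have "(\<tau> / T) *\<^sub>R (y - (y + (T / t) *\<^sub>R (x - y))) = ((\<tau> / T) * (T/t)) *\<^sub>R (y - x)"
    by (simp add: algebra_simps)
  also have "(\<tau> / T) * (T/t) = \<tau>/t" using assms by simp
  finally show ?thesis .
qed

lemma vec2:
  fixes x y z :: "'a::real_vector"
  assumes "t \<noteq> 0" "T \<noteq> 0"
  shows "z - (x + (T / t) *\<^sub>R (y - x)) + ((T - t + \<tau>) / T) *\<^sub>R (x + (T / t) *\<^sub>R (y - x) - x)
       = z - y + (\<tau> / t) *\<^sub>R (y - x)"
proof -
  have e: "((T - t + \<tau>) / T) * (T / t) = T/t - 1 + \<tau>/t" using assms by (simp add: field_simps)
  have "z - (x + (T / t) *\<^sub>R (y - x)) + ((T - t + \<tau>) / T) *\<^sub>R (x + (T / t) *\<^sub>R (y - x) - x)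
     = z - x - (T / t) *\<^sub>R (y - x) + (((T - t + \<tau>) / T) * (T / t)) *\<^sub>R (y - x)"
    by (simp add: algebra_simps)
  also have "\<dots> = z - x - (T / t) *\<^sub>R (y - x) + (T/t - 1 + \<tau>/t) *\<^sub>R (y - x)" by (simp only: e)
  also have "\<dots> = z - y + (\<tau> / t) *\<^sub>R (y - x)" by (simp add: algebra_simps)
  finally show ?thesis .
qed

lemma norm_diff_sq:
  fixes a b :: "'a::real_inner"
  shows "(norm (a - c *\<^sub>R b))\<^sup>2 = (norm a)\<^sup>2 - 2 * c * inner a b + c^2 * (norm b)\<^sup>2"
  unfolding power2_norm_eq_inner
  by (simp add: inner_diff_left inner_diff_right inner_commute power2_eq_square algebra_simps)

lemma exid: fixes s t A B D :: real assumes "0 < s" "s < t"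
  shows "- A / (4 * s) + - (B - 2 * D + A) / (4 * (t - s)) - - B / (4 * t)
      = - (A - 2 * (s/t) * D + (s/t)^2 * B) / (4 * (s * (t - s) / t))"
proof -
  have "t > 0" "t - s \<noteq> 0" "s \<noteq> 0" "t \<noteq> 0" using assms by auto
  then show ?thesis
    apply (simp add: divide_simps power2_eq_square)
    apply (simp add: algebra_simps)
    done
qed

lemma regroup: fixes p1 p2 p3 e1 e2 e3 :: real
  shows "(p1 * e1) * (p2 * e2) / (p3 * e3) = (p1 * p2 / p3) * (e1 * e2 / e3)"
  by simp

lemma bridge:
  fixes x y z :: "'a::euclidean_space"
  assumes "0 < s" "s < t"
  shows "gker s x z * gker (t - s) z y / gker t x y =
     (4 * pi * (s * (t - s) / t)) powr (- real DIM('a) / 2) *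
     exp (- (norm (z - (x + (s / t) *\<^sub>R (y - x))))\<^sup>2 / (4 * (s * (t - s) / t)))"
proof -
  define e where "e = - real DIM('a) / 2"
  define A where "A = (norm (z - x))\<^sup>2"
  define B where "B = (norm (y - x))\<^sup>2"
  define D where "D = inner (z - x) (y - x)"
  have t0: "t > 0" "t - s > 0" using assms by auto
  have nA: "(norm (y - z))\<^sup>2 = B - 2 * D + A"
  proof -
    have "y - z = (y - x) - (z - x)" by simp
    then have "(norm (y - z))\<^sup>2 = (norm ((y - x) - (z - x)))\<^sup>2" by metis
    also have "\<dots> = B - 2 * D + A" unfolding A_def B_def D_def
      using norm_diff_sq[of "y - x" 1 "z - x"] by (simp add: inner_commute)
    finally show ?thesis .
  qed
  have nM: "(norm (z - (x + (s / t) *\<^sub>R (y - x))))\<^sup>2 = A - 2 * (s/t) * D + (s/t)^2 * B"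
  proof -
    have "z - (x + (s / t) *\<^sub>R (y - x)) = (z - x) - (s / t) *\<^sub>R (y - x)" by simp
    then have "(norm (z - (x + (s / t) *\<^sub>R (y - x))))\<^sup>2 = (norm ((z - x) - (s / t) *\<^sub>R (y - x)))\<^sup>2" by metis
    also have "\<dots> = A - 2 * (s/t) * D + (s/t)^2 * B" unfolding A_def B_def D_def
      by (rule norm_diff_sq)
    finally show ?thesis .
  qed
  have ex: "- A / (4 * s) + - (B - 2 * D + A) / (4 * (t - s)) - - B / (4 * t)
      = - (A - 2 * (s/t) * D + (s/t)^2 * B) / (4 * (s * (t - s) / t))"
    using assms by (rule exid)
  have pw: "(4 * pi * s) powr e * (4 * pi * (t - s)) powr e / (4 * pi * t) powr e
      = (4 * pi * (s * (t - s) / t)) powr e"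
  proof -
    have "(4 * pi * s) powr e * (4 * pi * (t - s)) powr e / (4 * pi * t) powr e
       = ((4 * pi * s) * (4 * pi * (t - s)) / (4 * pi * t)) powr e"
      using assms t0 by (simp add: powr_mult powr_divide)
    also have "(4 * pi * s) * (4 * pi * (t - s)) / (4 * pi * t) = 4 * pi * (s * (t - s) / t)"
      using t0 by (simp add: field_simps)
    finally show ?thesis .
  qed
  have "gker s x z * gker (t - s) z y / gker t x y =
     ((4 * pi * s) powr e * (4 * pi * (t - s)) powr e / (4 * pi * t) powr e) *
     exp (- A / (4 * s) + - (norm (y - z))\<^sup>2 / (4 * (t - s)) - - B / (4 * t))"
  proof -
    have h1: "gker s x z * gker (t - s) z y / gker t x y =
     ((4 * pi * s) powr e * (4 * pi * (t - s)) powr e / (4 * pi * t) powr e) *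
     (exp (- A / (4 * s)) * exp (- (norm (y - z))\<^sup>2 / (4 * (t - s))) / exp (- B / (4 * t)))"
      unfolding gker_def e_def[symmetric] A_def B_def by (rule regroup)
    have h2: "exp (- A / (4 * s)) * exp (- (norm (y - z))\<^sup>2 / (4 * (t - s))) / exp (- B / (4 * t))
      = exp (- A / (4 * s) + - (norm (y - z))\<^sup>2 / (4 * (t - s)) - - B / (4 * t))"
      by (simp only: exp_add exp_diff)
    show ?thesis unfolding h1 h2 by (rule refl)
  qed
  also have "\<dots> = (4 * pi * (s * (t - s) / t)) powr e *
     exp (- (norm (z - (x + (s / t) *\<^sub>R (y - x))))\<^sup>2 / (4 * (s * (t - s) / t)))"
    unfolding pw nA nM ex ..
  finally show ?thesis unfolding e_def .
qed

lemma compare: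
  assumes "0 < a" "a \<le> b" "b \<le> 2 * a" "r \<ge> 0" "e \<ge> 0"
  shows "(4 * pi * a) powr (- e) * exp (- r / (4 * a)) \<le> 2 powr e * ((4 * pi * b) powr (- e) * exp (- r / (4 * b)))"
proof -
  have b0: "b > 0" using assms by auto
  have E: "exp (- r / (4 * a)) \<le> exp (- r / (4 * b))"
    using assms b0 by (simp add: frac_le)
  have P: "(4 * pi * a) powr (- e) = (4 * pi * b) powr (- e) * (b / a) powr e"
  proof -
    have l: "ln (4 * pi * a) = ln (4 * pi * b) - ln (b / a)" using assms b0
      by (simp add: ln_mult ln_div)
    have "(4 * pi * a) powr (- e) = exp (- e * ln (4 * pi * a))" using assms by (simp add: powr_def)
    also have "\<dots> = exp (- e * ln (4 * pi * b)) * exp (e * ln (b / a))"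
      unfolding l by (simp add: exp_add[symmetric] algebra_simps)
    also have "\<dots> = (4 * pi * b) powr (- e) * (b / a) powr e" using assms b0 by (simp add: powr_def)
    finally show ?thesis .
  qed
  have R: "(b / a) powr e \<le> 2 powr e"
    using assms b0 by (intro powr_mono2) (auto simp: field_simps)
  have "(4 * pi * a) powr (- e) * exp (- r / (4 * a)) \<le> (4 * pi * b) powr (- e) * (b / a) powr e * exp (- r / (4 * b))"
    unfolding P by (intro mult_left_mono E) auto
  also have "\<dots> \<le> (4 * pi * b) powr (- e) * 2 powr e * exp (- r / (4 * b))"
    by (intro mult_right_mono mult_left_mono R) auto
  finally show ?thesis by (simp add: ac_simps)
qed
lemma le_add_self1: "(a::ennreal) \<le> a + b" by (simp add: add_increasing2)
lemma le_add_self2: "(b::ennreal) \<le> a + b" by (simp add: add_increasing)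

lemma Nfun_le_Nnorm: "Nfun V T a b \<le> Nnorm V T"
  unfolding Nnorm_def by (rule SUP_upper2[of "(a, b)"]) auto

lemma Sfun_le_Snorm: "Sfun V T a b \<le> Snorm V T"
  unfolding Snorm_def by (rule SUP_upper2[of "(a, b)"]) auto

lemma N_part1:
  fixes V :: "'a::euclidean_space \<Rightarrow> real"
  assumes "0 < t" "t \<le> T"
  shows "(\<integral>\<^sup>+ \<tau>. indicator {0<..<t/2} \<tau> *
        (\<integral>\<^sup>+ z. ennreal (\<tau> powr (- real DIM('a) / 2) *
            exp (- (norm (z - y + (\<tau> / t) *\<^sub>R (y - x)))\<^sup>2 / (4 * \<tau>)) * \<bar>V z\<bar>) \<partial>lborel) \<partial>lborel)
    \<le> Nnorm V T"
proof -
  define x' where "x' = y + (T / t) *\<^sub>R (x - y)"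
  have v: "(\<tau> / T) *\<^sub>R (y - x') = (\<tau> / t) *\<^sub>R (y - x)" for \<tau>
    unfolding x'_def using assms by (intro vec1) auto
  have "(\<integral>\<^sup>+ \<tau>. indicator {0<..<t/2} \<tau> *
        (\<integral>\<^sup>+ z. ennreal (\<tau> powr (- real DIM('a) / 2) *
            exp (- (norm (z - y + (\<tau> / t) *\<^sub>R (y - x)))\<^sup>2 / (4 * \<tau>)) * \<bar>V z\<bar>) \<partial>lborel) \<partial>lborel)
    \<le> (\<integral>\<^sup>+ \<tau>. indicator {0<..<T/2} \<tau> *
        (\<integral>\<^sup>+ z. ennreal (\<tau> powr (- real DIM('a) / 2) *
            exp (- (norm (z - y + (\<tau> / T) *\<^sub>R (y - x')))\<^sup>2 / (4 * \<tau>)) * \<bar>V z\<bar>) \<partial>lborel) \<partial>lborel)"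
    unfolding v
  proof (rule nn_integral_mono)
    fix \<tau> :: real
    show "indicator {0<..<t/2} \<tau> * F \<le> indicator {0<..<T/2} \<tau> * F" for F :: ennreal
      using assms by (cases "\<tau> \<in> {0<..<t/2}") (auto simp: indicator_def)
  qed
  also have "\<dots> \<le> Nfun V T x' y" unfolding Nfun_def by (rule le_add_self1)
  also have "\<dots> \<le> Nnorm V T" by (rule Nfun_le_Nnorm)
  finally show ?thesis .
qed

lemma N_part2:
  fixes V :: "'a::euclidean_space \<Rightarrow> real"
  assumes "0 < t" "t \<le> T" and [measurable]: "V \<in> borel_measurable borel"
  shows "(\<integral>\<^sup>+ \<tau>. indicator {t/2..<t} \<tau> *
        (\<integral>\<^sup>+ z. ennreal ((t - \<tau>) powr (- real DIM('a) / 2) *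
            exp (- (norm (z - y + (\<tau> / t) *\<^sub>R (y - x)))\<^sup>2 / (4 * (t - \<tau>))) * \<bar>V z\<bar>) \<partial>lborel) \<partial>lborel)
    \<le> Nnorm V T"
proof -
  define y' where "y' = x + (T / t) *\<^sub>R (y - x)"
  define G where "G = (\<lambda>\<tau>. indicator {T/2..<T} \<tau> *
        (\<integral>\<^sup>+ z. ennreal ((T - \<tau>) powr (- real DIM('a) / 2) *
            exp (- (norm (z - y' + (\<tau> / T) *\<^sub>R (y' - x)))\<^sup>2 / (4 * (T - \<tau>))) * \<bar>V z\<bar>) \<partial>lborel))"
  have Gm: "G \<in> borel_measurable borel" unfolding G_def by measurable
  have v: "z - y' + ((T - t + \<tau>) / T) *\<^sub>R (y' - x) = z - y + (\<tau> / t) *\<^sub>R (y - x)" for z \<tau>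
    unfolding y'_def using assms by (intro vec2) auto
  have tt: "T - (T - t + \<tau>) = t - \<tau>" for \<tau> by simp
  have "(\<integral>\<^sup>+ \<tau>. indicator {t/2..<t} \<tau> *
        (\<integral>\<^sup>+ z. ennreal ((t - \<tau>) powr (- real DIM('a) / 2) *
            exp (- (norm (z - y + (\<tau> / t) *\<^sub>R (y - x)))\<^sup>2 / (4 * (t - \<tau>))) * \<bar>V z\<bar>) \<partial>lborel) \<partial>lborel)
     \<le> (\<integral>\<^sup>+ \<tau>. G (T - t + 1 * \<tau>) \<partial>lborel)"
  proof (rule nn_integral_mono)
    fix \<tau> :: real
    have "indicator {t/2..<t} \<tau> \<le> (indicator {T/2..<T} (T - t + 1 * \<tau>) :: ennreal)"
      using assms by (cases "\<tau> \<in> {t/2..<t}") (auto simp: indicator_def)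
    then show "indicator {t/2..<t} \<tau> *
        (\<integral>\<^sup>+ z. ennreal ((t - \<tau>) powr (- real DIM('a) / 2) *
            exp (- (norm (z - y + (\<tau> / t) *\<^sub>R (y - x)))\<^sup>2 / (4 * (t - \<tau>))) * \<bar>V z\<bar>) \<partial>lborel)
       \<le> G (T - t + 1 * \<tau>)"
      unfolding G_def mult_1 tt v by (rule mult_right_mono) simp
  qed
  also have "\<dots> = (\<integral>\<^sup>+ \<tau>. G \<tau> \<partial>lborel)"
    using nn_integral_real_affine[OF Gm, of 1 "T - t"] by simp
  also have "\<dots> \<le> Nfun V T x y'" unfolding Nfun_def G_def by (rule le_add_self2)
  also have "\<dots> \<le> Nnorm V T" by (rule Nfun_le_Nnorm)
  finally show ?thesis .
qed

lemma N_main: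
  fixes V :: "'a::euclidean_space \<Rightarrow> real"
  assumes "0 < t" "t \<le> T" and [measurable]: "V \<in> borel_measurable borel"
  shows "Nnorm V t \<le> 2 * Nnorm V T"
  unfolding Nnorm_def[of V t]
proof (rule SUP_least)
  fix xy :: "'a \<times> 'a"
  obtain x y where xy: "xy = (x, y)" by fastforce
  have "Nfun V t x y \<le> Nnorm V T + Nnorm V T"
    unfolding Nfun_def using N_part1[OF assms(1,2)] N_part2[OF assms] by (rule add_mono)
  then show "Nfun V t (fst xy) (snd xy) \<le> 2 * Nnorm V T" by (simp add: xy mult_2)
qed


definition Kf :: "real \<Rightarrow> 'a::euclidean_space \<Rightarrow> 'a \<Rightarrow> real \<Rightarrow> 'a \<Rightarrow> real" where
  "Kf t a b s z = gker s a z * gker (t - s) z b / gker t a b"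

definition FF :: "('a::euclidean_space \<Rightarrow> real) \<Rightarrow> real \<Rightarrow> 'a \<Rightarrow> 'a \<Rightarrow> real \<Rightarrow> ennreal" where
  "FF V t a b s = (\<integral>\<^sup>+ z. ennreal (Kf t a b s z * \<bar>V z\<bar>) \<partial>lborel)"

lemma Sfun_alt: "Sfun V t x y = (\<integral>\<^sup>+ s. indicator {0<..<t} s * FF V t x y s \<partial>lborel)"
  unfolding Sfun_def FF_def Kf_def ..

lemma FF_meas:
  fixes V :: "'a::euclidean_space \<Rightarrow> real"
  assumes [measurable]: "V \<in> borel_measurable borel"
  shows "FF V t a b \<in> borel_measurable borel"
  unfolding FF_def Kf_def gker_def by measurable

lemma gker_sym: "gker t a b = gker t b a"
  unfolding gker_def by (simp add: norm_minus_commute)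

lemma Kf_sym: "Kf t a b s z = Kf t b a (t - s) z"
  unfolding Kf_def by (simp add: gker_sym[of t a b] gker_sym[of s a z] gker_sym[of "t - s" z b] mult.commute)

lemma Kf_comp:
  fixes a b z :: "'a::euclidean_space"
  assumes "0 < u" "u \<le> t/2" "t \<le> T"
  shows "Kf t a b u z \<le> 2 powr (real DIM('a) / 2) * Kf T a (a + (T / t) *\<^sub>R (b - a)) u z"
proof -
  have t0: "0 < t" "u < t" "u < T" "0 < T" using assms by auto
  have c: "a + (u / T) *\<^sub>R ((a + (T / t) *\<^sub>R (b - a)) - a) = a + (u / t) *\<^sub>R (b - a)"
  proof -
    have "T \<noteq> 0" using t0 assms by auto
    then have "(u / T) * (T / t) = u / t" using t0 by simp
    then show ?thesis by (simp add: scaleR_scaleR)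
  qed
  have e: "- real DIM('a) / 2 = - (real DIM('a) / 2)" by simp
  have le1: "u * (t - u) / t \<le> u * (T - u) / T"
  proof -
    have "u * (t - u) / t = u - u^2 / t" "u * (T - u) / T = u - u^2 / T"
      using t0 by (simp_all add: field_simps power2_eq_square)
    moreover have "u^2 / T \<le> u^2 / t" using t0 assms by (intro divide_left_mono) auto
    ultimately show ?thesis by simp
  qed
  have le2: "u * (T - u) / T \<le> 2 * (u * (t - u) / t)"
  proof -
    have "u * (T - u) / T \<le> u" using t0 by (simp add: field_simps)
    moreover have "u \<le> 2 * (u * (t - u) / t)" using t0 assms by (simp add: field_simps)
    ultimately show ?thesis by linarith
  qed
  have p: "0 < u * (t - u) / t" using t0 assms by simp
  show ?thesis
    unfolding Kf_def bridge[OF assms(1) t0(2)] bridge[OF assms(1) t0(3)] c e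
    by (rule compare[OF p le1 le2]) auto
qed

lemma FF_comp:
  fixes V :: "'a::euclidean_space \<Rightarrow> real"
  assumes "0 < u" "u \<le> t/2" "t \<le> T" and [measurable]: "V \<in> borel_measurable borel"
  shows "FF V t a b u \<le> ennreal (2 powr (real DIM('a) / 2)) * FF V T a (a + (T / t) *\<^sub>R (b - a)) u"
proof -
  define c where "c = 2 powr (real DIM('a) / 2)"
  define b' where "b' = a + (T / t) *\<^sub>R (b - a)"
  have "FF V t a b u \<le> (\<integral>\<^sup>+ z. ennreal c * ennreal (Kf T a b' u z * \<bar>V z\<bar>) \<partial>lborel)"
    unfolding FF_def
  proof (rule nn_integral_mono)
    fix z
    have k: "Kf t a b u z \<le> c * Kf T a b' u z" unfolding c_def b'_def by (rule Kf_comp[OF assms(1-3)])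
    have "Kf t a b u z * \<bar>V z\<bar> \<le> c * (Kf T a b' u z * \<bar>V z\<bar>)"
      using mult_right_mono[OF k, of "\<bar>V z\<bar>"] by (simp add: ac_simps)
    then show "ennreal (Kf t a b u z * \<bar>V z\<bar>) \<le> ennreal c * ennreal (Kf T a b' u z * \<bar>V z\<bar>)"
      by (metis c_def ennreal_leI ennreal_mult' powr_ge_zero)
  qed
  also have "\<dots> = ennreal c * FF V T a b' u"
    unfolding FF_def by (rule nn_integral_cmult) (unfold Kf_def gker_def, measurable)
  finally show ?thesis unfolding c_def b'_def .
qed

lemma S_main:
  fixes V :: "'a::euclidean_space \<Rightarrow> real"
  assumes "0 < t" "t \<le> T" and [measurable]: "V \<in> borel_measurable borel"
  shows "Snorm V t \<le> ennreal (2 * 2 powr (real DIM('a) / 2)) * Snorm V T"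
  unfolding Snorm_def[of V t]
proof (rule SUP_least)
  fix xy :: "'a \<times> 'a"
  obtain x y where xy: "xy = (x, y)" by fastforce
  define c where "c = 2 powr (real DIM('a) / 2)"
  have c0: "c \<ge> 0" unfolding c_def by simp
  define y' where "y' = x + (T / t) *\<^sub>R (y - x)"
  define x'' where "x'' = y + (T / t) *\<^sub>R (x - y)"
  have Fm[measurable]: "FF V s a b \<in> borel_measurable borel" for s a b by (rule FF_meas) simp
  have split: "indicator {0<..<t} s * FF V t x y s =
     indicator {0<..t/2} s * FF V t x y s + indicator {t/2<..<t} s * FF V t x y s" for s
  proof -
    have "(indicator {0<..<t} s :: ennreal) = indicator {0<..t/2} s + indicator {t/2<..<t} s"
      using assms unfolding indicator_def by auto
    then show ?thesis by (simp add: distrib_right)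
  qed
  have "Sfun V t x y = (\<integral>\<^sup>+ s. indicator {0<..t/2} s * FF V t x y s \<partial>lborel)
      + (\<integral>\<^sup>+ s. indicator {t/2<..<t} s * FF V t x y s \<partial>lborel)"
    unfolding Sfun_alt split by (rule nn_integral_add) auto
  also have "\<dots> \<le> ennreal c * Snorm V T + ennreal c * Snorm V T"
  proof (rule add_mono)
    have "(\<integral>\<^sup>+ s. indicator {0<..t/2} s * FF V t x y s \<partial>lborel)
        \<le> (\<integral>\<^sup>+ s. ennreal c * (indicator {0<..<T} s * FF V T x y' s) \<partial>lborel)"
    proof (rule nn_integral_mono)
      fix s
      show "indicator {0<..t/2} s * FF V t x y s \<le> ennreal c * (indicator {0<..<T} s * FF V T x y' s)"
      proof (cases "s \<in> {0<..t/2}")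
        case True
        then have "s \<in> {0<..<T}" using assms by auto
        with True FF_comp[of s t T V x y] assms show ?thesis by (simp add: c_def y'_def)
      qed simp
    qed
    also have "\<dots> = ennreal c * Sfun V T x y'"
      unfolding Sfun_alt by (rule nn_integral_cmult) simp
    also have "\<dots> \<le> ennreal c * Snorm V T" by (intro mult_left_mono Sfun_le_Snorm) simp
    finally show "(\<integral>\<^sup>+ s. indicator {0<..t/2} s * FF V t x y s \<partial>lborel) \<le> ennreal c * Snorm V T" .
  next
    define G where "G = (\<lambda>s. indicator {0<..<T} s * FF V T x'' y s)"
    have Gm: "G \<in> borel_measurable borel" unfolding G_def by simp
    have "(\<integral>\<^sup>+ s. indicator {t/2<..<t} s * FF V t x y s \<partial>lborel)
        \<le> (\<integral>\<^sup>+ s. ennreal c * G (T - t + 1 * s) \<partial>lborel)"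
    proof (rule nn_integral_mono)
      fix s
      show "indicator {t/2<..<t} s * FF V t x y s \<le> ennreal c * G (T - t + 1 * s)"
      proof (cases "s \<in> {t/2<..<t}")
        case True
        then have u: "0 < t - s" "t - s \<le> t / 2" "T - t + 1 * s \<in> {0<..<T}" using assms by auto
        have "FF V t x y s = FF V t y x (t - s)"
          unfolding FF_def by (subst Kf_sym) simp
        also have "\<dots> \<le> ennreal c * FF V T y x'' (t - s)"
          unfolding c_def x''_def by (rule FF_comp[OF u(1,2) assms(2,3)])
        also have "FF V T y x'' (t - s) = FF V T x'' y (T - t + 1 * s)"
          unfolding FF_def by (subst Kf_sym) simp
        finally show ?thesis using True u by (simp add: G_def)
      qed simp
    qed
    also have "\<dots> = ennreal c * (\<integral>\<^sup>+ s. G (T - t + 1 * s) \<partial>lborel)"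
      by (rule nn_integral_cmult) (unfold G_def, simp)
    also have "(\<integral>\<^sup>+ s. G (T - t + 1 * s) \<partial>lborel) = (\<integral>\<^sup>+ s. G s \<partial>lborel)"
      using nn_integral_real_affine[OF Gm, of 1 "T - t"] by simp
    also have "\<dots> = Sfun V T x'' y" unfolding Sfun_alt G_def ..
    also have "ennreal c * \<dots> \<le> ennreal c * Snorm V T" by (intro mult_left_mono Sfun_le_Snorm) simp
    finally show "(\<integral>\<^sup>+ s. indicator {t/2<..<t} s * FF V t x y s \<partial>lborel) \<le> ennreal c * Snorm V T" .
  qed
  also have "\<dots> = 2 * (ennreal c * Snorm V T)" by (rule mult_2[symmetric])
  also have "\<dots> = (2 * ennreal c) * Snorm V T" by (rule mult.assoc[symmetric])
  also have "2 * ennreal c = ennreal (2 * c)" using c0 by (simp add: ennreal_mult)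
  
  finally show "Sfun V t (fst xy) (snd xy) \<le> ennreal (2 * 2 powr (real DIM('a) / 2)) * Snorm V T"
    by (simp add: xy c_def)
qed


theorem corollary2p4:
  "(\<forall>(V :: 'a::euclidean_space \<Rightarrow> real) T. T > 0 \<longrightarrow> V \<in> borel_measurable borel \<longrightarrow>
      Nnorm V T \<le> NnormT V T \<and> NnormT V T \<le> 2 * Nnorm V T)
   \<and> (\<exists>C :: real. \<forall>(V :: 'a \<Rightarrow> real) T. T > 0 \<longrightarrow> V \<in> borel_measurable borel \<longrightarrow>
      Snorm V T \<le> SnormT V T \<and> SnormT V T \<le> ennreal C * Snorm V T)"
proof (intro conjI allI impI exI[of _ "2 * 2 powr (real DIM('a) / 2)"])
  fix V :: "'a \<Rightarrow> real" and T :: real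
  assume T: "T > 0" and V: "V \<in> borel_measurable borel"
  show "Nnorm V T \<le> NnormT V T" unfolding NnormT_def
    by (rule SUP_upper2[of T]) (use T in auto)
  show "NnormT V T \<le> 2 * Nnorm V T" unfolding NnormT_def
    by (rule SUP_least) (use N_main V in auto)
next
  fix V :: "'a \<Rightarrow> real" and T :: real
  assume T: "T > 0" and V: "V \<in> borel_measurable borel"
  show "Snorm V T \<le> SnormT V T" unfolding SnormT_def
    by (rule SUP_upper2[of T]) (use T in auto)
  show "SnormT V T \<le> ennreal (2 * 2 powr (real DIM('a) / 2)) * Snorm V T" unfolding SnormT_def
    by (rule SUP_least) (use S_main V in auto)
qed

end
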